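(* Let $f(z)=\sum_{n\ge1} f_n z^n$ be a formal power series over $\mathbb{C}$ with $f_1\neq 0$ such that $-f(z)$ has compositional order exactly $2$, i.e. $-f(-f(z))=z$ and $-f(z)\neq z$. Then the set $\{g(z)\in F_0[[z]] : (g(z),f(z)) \text{ is a pseudo-involution}\}$ is an infinite subgroup of the multiplicative group $F_0[[z]]$.
   Context: $F_0[[z]]$ denotes the set of formal power series over $\mathbb{C}$ with nonzero constant term, which is a group under multiplication of power series. A Riordan matrix is a pair $(g(z),f(z))$ of formal power series over $\mathbb{C}$ with $g(z)=\sum_{n\ge 0} g_n z^n$, $g_0\neq 0$, and $f(z)=\sum_{n\ge 1} f_n z^n$ with $f_1\neq 0$; it represents the infinite lower-triangular matrix whose $k$-th column ($k\ge 0$) has generating function $g(z)f(z)^k$. Riordan matrices form a group under matrix multiplication, where $(g(z),f(z))*(h(z),l(z))=(g(z)h(f(z)),\,l(f(z)))$ and the identity is $(1,z)$. Let $M=(1,-z)$. A Riordan matrix $L$ is called a pseudo-involution if $(L*M)*(L*M)=(1,z)$. *)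

theory Defs
  imports "HOL-Computational_Algebra.Formal_Power_Series"
begin

definition riordan :: "complex fps \<times> complex fps \<Rightarrow> bool" where
  "riordan p \<longleftrightarrow> fps_nth (fst p) 0 \<noteq> 0 \<and> fps_nth (snd p) 0 = 0 \<and> fps_nth (snd p) 1 \<noteq> 0"

definition riordan_mult ::
  "complex fps \<times> complex fps \<Rightarrow> complex fps \<times> complex fps \<Rightarrow> complex fps \<times> complex fps" where
  "riordan_mult p q = (fst p * (fst q oo snd p), snd q oo snd p)"

definition riordan_M :: "complex fps \<times> complex fps" where
  "riordan_M = (1, - fps_X)"

definition pseudo_involution :: "complex fps \<times> complex fps \<Rightarrow> bool" where
  "pseudo_involution L \<longleftrightarrow> riordan L \<and>
     riordan_mult (riordan_mult L riordan_M) (riordan_mult L riordan_M) = (1, fps_X)"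

end

theory Submission
  imports Defs
begin

lemma pi_iff:
  fixes f g :: "complex fps"
  assumes "fps_nth f 0 = 0" and "fps_nth f 1 \<noteq> 0"
    and "(- f) oo (- f) = fps_X" and "fps_nth g 0 \<noteq> 0"
  shows "pseudo_involution (g, f) \<longleftrightarrow> g * (g oo (- f)) = 1"
proof -
  have "riordan_mult (g, f) riordan_M = (g, - f)"
    using assms(1) by (simp add: riordan_mult_def riordan_M_def fps_compose_uminus)
  then show ?thesis using assms
    by (simp add: pseudo_involution_def riordan_def riordan_mult_def riordan_M_def)
qed

theorem theorem25:
  fixes f :: "complex fps"
  assumes "fps_nth f 0 = 0" and "fps_nth f 1 \<noteq> 0"
    and "(- f) oo (- f) = fps_X" and "- f \<noteq> fps_X"
  defines "S \<equiv> {g :: complex fps. fps_nth g 0 \<noteq> 0 \<and> pseudo_involution (g, f)}"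
  shows "S \<subseteq> {g. fps_nth g 0 \<noteq> 0} \<and> 1 \<in> S
         \<and> (\<forall>g\<in>S. \<forall>h\<in>S. g * h \<in> S) \<and> (\<forall>g\<in>S. inverse g \<in> S)
         \<and> infinite S"
proof -
  define h where "h = - f"
  have h0: "fps_nth h 0 = 0" using assms(1) by (simp add: h_def)
  have hh: "h oo h = fps_X" using assms(3) by (simp add: h_def)
  have hX: "h \<noteq> fps_X" using assms(4) by (simp add: h_def)
  have S: "S = {g. fps_nth g 0 \<noteq> 0 \<and> g * (g oo h) = 1}"
    unfolding S_def h_def using pi_iff[OF assms(1,2,3)] by blast
  have A: "S \<subseteq> {g. fps_nth g 0 \<noteq> 0}" using S by auto
  have B: "1 \<in> S" using S by simp
  have C: "\<forall>g\<in>S. \<forall>k\<in>S. g * k \<in> S"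
  proof (intro ballI)
    fix g k assume g: "g \<in> S" and k: "k \<in> S"
    have "(g * k) * ((g * k) oo h) = (g * (g oo h)) * (k * (k oo h))"
      by (simp only: fps_compose_mult_distrib[OF h0] mult_ac)
    also have "\<dots> = 1" using g k S by simp
    finally show "g * k \<in> S" using g k S by simp
  qed
  have D: "\<forall>g\<in>S. inverse g \<in> S"
  proof
    fix g assume g: "g \<in> S"
    have g0: "fps_nth g 0 \<noteq> 0" and e: "g * (g oo h) = 1" using g S by auto
    have "inverse g * (inverse g oo h) = inverse g * inverse (g oo h)"
      by (simp add: fps_inverse_compose[OF h0 g0])
    also have "\<dots> = inverse (g * (g oo h))" by (simp add: fps_inverse_mult)
    also have "\<dots> = 1" using e by simp
    finally show "inverse g \<in> S" using S g0 by simp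
  qed
  define G where "G n = (fps_const (of_nat (Suc n)) + h) * inverse (fps_const (of_nat (Suc n)) + fps_X)" for n
  have GS: "G n \<in> S" for n
  proof -
    let ?c = "fps_const (of_nat (Suc n) :: complex)"
    have cn: "(1 + of_nat n :: complex) \<noteq> 0" proof -
      have "(of_nat (Suc n) :: complex) \<noteq> 0" by (simp only: of_nat_eq_0_iff)
      then show ?thesis by simp
    qed
    have c0: "fps_nth (?c + fps_X) 0 \<noteq> 0" using cn by simp
    have c1: "fps_nth (?c + h) 0 \<noteq> 0" using h0 cn by simp
    have ic: "inverse (?c + fps_X) oo h = inverse (?c + h)"
      using fps_inverse_compose[OF h0 c0] h0 by (simp add: fps_compose_add_distrib del: of_nat_Suc)
    have "G n oo h = (?c + fps_X) * inverse (?c + h)"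
      unfolding G_def fps_compose_mult_distrib[OF h0] ic
      by (simp add: fps_compose_add_distrib hh del: of_nat_Suc)
    then have "G n * (G n oo h) = ((?c + h) * inverse (?c + h)) * ((?c + fps_X) * inverse (?c + fps_X))"
      unfolding G_def by (simp add: mult_ac)
    also have "\<dots> = 1" using c0 c1 by (simp add: inverse_mult_eq_1')
    finally have e: "G n * (G n oo h) = 1" .
    have "fps_nth (G n) 0 \<noteq> 0" using e
      by (metis fps_mult_nth_0 mult_zero_left one_neq_zero fps_one_nth)
    then show ?thesis using e S by simp
  qed
  have "inj G"
  proof (rule injI)
    fix m n assume "G m = G n"
    define a where "a = fps_const (of_nat (Suc m) :: complex)"
    define b where "b = fps_const (of_nat (Suc n) :: complex)"
    have a0: "fps_nth (a + fps_X) 0 \<noteq> 0" by (simp add: a_def del: of_nat_Suc)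
    have b0: "fps_nth (b + fps_X) 0 \<noteq> 0" by (simp add: b_def del: of_nat_Suc)
    have eq: "(a + h) * inverse (a + fps_X) = (b + h) * inverse (b + fps_X)"
      using \<open>G m = G n\<close> by (simp add: G_def a_def b_def)
    have ia: "inverse (a + fps_X) * (a + fps_X) = 1" using a0 by (rule inverse_mult_eq_1)
    have ib: "inverse (b + fps_X) * (b + fps_X) = 1" using b0 by (rule inverse_mult_eq_1)
    have "(a + h) * (b + fps_X) = (a + h) * (inverse (a + fps_X) * (a + fps_X)) * (b + fps_X)"
      by (simp add: ia)
    also have "\<dots> = ((a + h) * inverse (a + fps_X)) * ((a + fps_X) * (b + fps_X))"
      by (simp only: mult_ac)
    also have "\<dots> = ((b + h) * inverse (b + fps_X)) * ((b + fps_X) * (a + fps_X))"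
      using eq by (simp add: mult_ac)
    also have "\<dots> = (b + h) * (inverse (b + fps_X) * (b + fps_X)) * (a + fps_X)"
      by (simp only: mult_ac)
    also have "\<dots> = (b + h) * (a + fps_X)"
      by (simp add: ib)
    finally have "(a + h) * (b + fps_X) = (b + h) * (a + fps_X)" .
    then have "(a - b) * (fps_X - h) = 0" by (simp add: algebra_simps)
    moreover have "fps_X - h \<noteq> 0" using hX by simp
    ultimately have "a = b" by simp
    then have "fps_nth a 0 = fps_nth b 0" by simp
    then have "(of_nat (Suc m) :: complex) = of_nat (Suc n)" by (simp add: a_def b_def del: of_nat_Suc)
    then show "m = n" by (simp only: of_nat_eq_iff nat.inject)
  qed
  then have E: "infinite S"
    using GS by (metis infinite_UNIV_nat finite_imageD finite_subset image_subsetI)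
  show ?thesis using A B C D E by blast
qed

end
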